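(* Let $X$ be a separable real Banach space and let $(\Omega,\beta,\mu)$ be a complete probability measure space. Let $T:\Omega\times X\to X$ be a continuous random mapping such that there are real-valued random variables $\alpha_2,\alpha_3:\Omega\to[0,\infty)$ with $\alpha_2(\omega)+\alpha_3(\omega)<1$ for all $\omega\in\Omega$ and, for every $\omega\in\Omega$ and all $X$-valued random variables $x_1,x_2:\Omega\to X$, $$\|T(\omega,x_1(\omega))-T(\omega,x_2(\omega))\|\le \alpha_2(\omega)\|x_1(\omega)-T(\omega,x_1(\omega))\|+\alpha_3(\omega)\|x_2(\omega)-T(\omega,x_2(\omega))\|.$$ Then $T$ has a random fixed point, and it is unique (any two random fixed points of $T$ coincide almost surely).
   Context: An $X$-valued random variable is a map $x:\Omega\to X$ such that $x^{-1}(B)\in\beta$ for every Borel set $B\subseteq X$. A random mapping is a map $T:\Omega\times X\to X$ such that $\omega\mapsto T(\omega,x)$ is an $X$-valued random variable for every fixed $x\in X$. A random mapping $T$ is continuous if the set of $\omega\in\Omega$ for which $x\mapsto T(\omega,x)$ is continuous has $\mu$-measure one. A random fixed point of $T$ is an $X$-valued random variable $x$ with $\mu\{\omega\in\Omega: T(\omega,x(\omega))=x(\omega)\}=1$. *)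

theory Defs
  imports "HOL-Analysis.Analysis" "HOL-Probability.Probability"
begin

definition random_mapping :: "'w measure \<Rightarrow> ('w \<Rightarrow> 'a::topological_space \<Rightarrow> 'a) \<Rightarrow> bool" where
  "random_mapping M T \<longleftrightarrow> (\<forall>x. (\<lambda>\<omega>. T \<omega> x) \<in> borel_measurable M)"

definition continuous_random_mapping :: "'w measure \<Rightarrow> ('w \<Rightarrow> 'a::topological_space \<Rightarrow> 'a) \<Rightarrow> bool" where
  "continuous_random_mapping M T \<longleftrightarrow> random_mapping M T \<and>
     measure M {\<omega> \<in> space M. continuous_on UNIV (T \<omega>)} = 1"

definition random_fixed_point :: "'w measure \<Rightarrow> ('w \<Rightarrow> 'a::topological_space \<Rightarrow> 'a) \<Rightarrow> ('w \<Rightarrow> 'a) \<Rightarrow> bool" where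
  "random_fixed_point M T x \<longleftrightarrow> x \<in> borel_measurable M \<and>
     measure M {\<omega> \<in> space M. T \<omega> (x \<omega>) = x \<omega>} = 1"

end

theory Submission
  imports Defs
begin

lemma reich_step:
  fixes T :: "'a::real_normed_vector \<Rightarrow> 'a"
  assumes a2: "0 \<le> a2" and a3: "0 \<le> a3" and s: "a2 + a3 < 1"
    and R: "\<And>a b. norm (T a - T b) \<le> a2 * norm (a - T a) + a3 * norm (b - T b)"
  shows "norm (T a - T (T a)) \<le> (a2 / (1 - a3)) * norm (a - T a)"
proof -
  have "norm (T a - T (T a)) \<le> a2 * norm (a - T a) + a3 * norm (T a - T (T a))" by (rule R)
  hence "(1 - a3) * norm (T a - T (T a)) \<le> a2 * norm (a - T a)" by (simp add: algebra_simps)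
  moreover have "1 - a3 > 0" using s a2 by linarith
  ultimately show ?thesis by (simp add: field_simps mult.commute)
qed

lemma reich_small:
  fixes T :: "'a::real_normed_vector \<Rightarrow> 'a"
  assumes a2: "0 \<le> a2" and a3: "0 \<le> a3" and s: "a2 + a3 < 1"
    and R: "\<And>a b. norm (T a - T b) \<le> a2 * norm (a - T a) + a3 * norm (b - T b)"
    and e: "0 < e"
  shows "\<exists>a. norm (a - T a) < e"
proof -
  define q where "q = a2 / (1 - a3)"
  have q0: "0 \<le> q" "q < 1" using a2 a3 s by (auto simp: q_def field_simps)
  define c where "c = norm (0 - T 0)"
  have I: "norm ((T^^k) 0 - T ((T^^k) 0)) \<le> q^k * c" for k
  proof (induction k)
    case 0 then show ?case by (simp add: c_def)
  next
    case (Suc k)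
    have "norm ((T^^Suc k) 0 - T ((T^^Suc k) 0)) \<le> q * norm ((T^^k) 0 - T ((T^^k) 0))"
      unfolding funpow.simps comp_def q_def by (rule reich_step[OF a2 a3 s R])
    also have "\<dots> \<le> q * (q^k * c)" using Suc q0 by (simp add: mult_left_mono)
    finally show ?case by simp
  qed
  have "(\<lambda>k. q^k * c) \<longlonglongrightarrow> 0 * c"
    by (intro tendsto_mult tendsto_const LIMSEQ_power_zero) (use q0 in auto)
  hence "eventually (\<lambda>k. q^k * c < e) sequentially" using e by (simp add: order_tendstoD(2))
  then obtain k where "q^k * c < e" by (auto simp: eventually_sequentially)
  thus ?thesis using I[of k] by (intro exI[of _ "(T^^k) 0"]) linarith
qed

lemma reich_conv:
  fixes T :: "'a::real_normed_vector \<Rightarrow> 'a"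
  assumes a2: "0 \<le> a2" and a3: "0 \<le> a3" and s: "a2 + a3 < 1"
    and R: "\<And>a b. norm (T a - T b) \<le> a2 * norm (a - T a) + a3 * norm (b - T b)"
    and p: "T p = p"
    and lim: "(\<lambda>n. norm (a n - T (a n))) \<longlonglongrightarrow> 0"
  shows "a \<longlonglongrightarrow> p"
proof -
  have B: "norm (a n - p) \<le> (1 + a2) * norm (a n - T (a n))" for n
  proof -
    have t: "norm (a n - p) \<le> norm (a n - T (a n)) + norm (T (a n) - T p)"
      using norm_triangle_ineq[of "a n - T (a n)" "T (a n) - T p"] unfolding p by simp
    have r: "norm (T (a n) - T p) \<le> a2 * norm (a n - T (a n)) + a3 * norm (p - T p)" by (rule R)
    have "norm (p - T p) = 0" unfolding p by simp
    with t r show ?thesis by (simp add: algebra_simps)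
  qed
  have L: "(\<lambda>n. (1 + a2) * norm (a n - T (a n))) \<longlonglongrightarrow> 0"
    using tendsto_mult[OF tendsto_const lim, of "1 + a2"] by simp
  have "(\<lambda>n. a n - p) \<longlonglongrightarrow> 0"
    by (rule Lim_null_comparison[OF always_eventually L]) (simp add: B)
  thus ?thesis by (rule LIM_zero_cancel)
qed

lemma reich_fix:
  fixes T :: "'a::banach \<Rightarrow> 'a"
  assumes a2: "0 \<le> a2" and a3: "0 \<le> a3" and s: "a2 + a3 < 1"
    and R: "\<And>a b. norm (T a - T b) \<le> a2 * norm (a - T a) + a3 * norm (b - T b)"
  shows "\<exists>!p. T p = p"
proof -
  have "\<forall>n. \<exists>a. norm (a - T a) < inverse (real (Suc n))"
    using reich_small[OF a2 a3 s R] by auto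
  then obtain a where a: "\<And>n. norm (a n - T (a n)) < inverse (real (Suc n))" by metis
  have bnd: "norm (a m - a n) \<le> 2 * norm (a m - T (a m)) + 2 * norm (a n - T (a n))" for m n
  proof -
    have "norm (a m - a n) \<le> norm (a m - T (a m)) + norm (T (a m) - T (a n)) + norm (T (a n) - a n)"
      using norm_triangle_ineq[of "a m - T (a m)" "T (a m) - T (a n)"]
        norm_triangle_ineq[of "a m - T (a m) + (T (a m) - T (a n))" "T (a n) - a n"] by simp
    also have "\<dots> \<le> norm (a m - T (a m)) + (a2 * norm (a m - T (a m)) + a3 * norm (a n - T (a n))) + norm (a n - T (a n))"
      using R[of "a m" "a n"] by (simp add: norm_minus_commute)
    also have "\<dots> \<le> 2 * norm (a m - T (a m)) + 2 * norm (a n - T (a n))"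
      using a2 a3 s mult_right_mono[of a2 1 "norm (a m - T (a m))"]
        mult_right_mono[of a3 1 "norm (a n - T (a n))"] by auto
    finally show ?thesis .
  qed
  have lim0: "(\<lambda>n. norm (a n - T (a n))) \<longlonglongrightarrow> 0"
  proof -
    have "\<forall>n. norm (norm (a n - T (a n))) \<le> inverse (real (Suc n))"
      using a by (simp add: less_imp_le)
    from Lim_null_comparison[OF always_eventually[OF this] LIMSEQ_inverse_real_of_nat]
    show ?thesis .
  qed
  have "Cauchy a"
  proof (rule CauchyI)
    fix e :: real assume e: "0 < e"
    have "eventually (\<lambda>n. norm (a n - T (a n)) < e / 4) sequentially"
      using lim0 e by (intro order_tendstoD(2)) auto
    then obtain N where N: "\<And>n. n \<ge> N \<Longrightarrow> norm (a n - T (a n)) < e / 4"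
      by (auto simp: eventually_sequentially)
    show "\<exists>M. \<forall>m\<ge>M. \<forall>n\<ge>M. norm (a m - a n) < e"
    proof (intro exI allI impI)
      fix m n assume "N \<le> m" "N \<le> n"
      with N[of m] N[of n] bnd[of m n] show "norm (a m - a n) < e" by linarith
    qed
  qed
  then obtain p where lp: "a \<longlonglongrightarrow> p" using convergent_eq_Cauchy convergent_def by blast
  have lpn: "(\<lambda>n. norm (p - a n)) \<longlonglongrightarrow> 0"
    using tendsto_norm[OF LIM_zero[OF lp]] by (simp add: norm_minus_commute)
  have "(1 - a3) * norm (p - T p) \<le> 0"
  proof (rule LIMSEQ_le_const)
    show "(\<lambda>n. norm (p - a n) + (1 + a2) * norm (a n - T (a n))) \<longlonglongrightarrow> 0"
      using tendsto_add[OF lpn tendsto_mult[OF tendsto_const lim0, of "1 + a2"]] by simp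
    show "\<exists>N. \<forall>n\<ge>N. (1 - a3) * norm (p - T p) \<le> norm (p - a n) + (1 + a2) * norm (a n - T (a n))"
    proof (intro exI allI impI)
      fix n
      have "norm (p - T p) \<le> norm (p - a n) + norm (a n - T (a n)) + norm (T (a n) - T p)"
        using norm_triangle_ineq[of "p - a n" "a n - T (a n)"]
          norm_triangle_ineq[of "p - a n + (a n - T (a n))" "T (a n) - T p"] by simp
      also have "\<dots> \<le> norm (p - a n) + norm (a n - T (a n)) + (a2 * norm (a n - T (a n)) + a3 * norm (p - T p))"
        using R[of "a n" p] by simp
      finally show "(1 - a3) * norm (p - T p) \<le> norm (p - a n) + (1 + a2) * norm (a n - T (a n))"
        by (simp add: algebra_simps)
    qed
  qed
  moreover have "1 - a3 > 0" using s a2 by linarith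
  ultimately have "norm (p - T p) \<le> 0" by (simp add: mult_le_0_iff)
  hence Tp: "T p = p" by simp
  have uq: "q = p" if "T q = q" for q
  proof -
    have "norm (T q - T p) \<le> a2 * norm (q - T q) + a3 * norm (p - T p)" by (rule R)
    hence "norm (q - p) \<le> 0" using Tp that by simp
    thus ?thesis by simp
  qed
  show ?thesis using Tp uq by (intro ex1I[of _ p])
qed

theorem corollary3p4:
  fixes M :: "'w measure"
    and T :: "'w \<Rightarrow> 'a::{banach, second_countable_topology} \<Rightarrow> 'a"
    and \<alpha>2 \<alpha>3 :: "'w \<Rightarrow> real"
  assumes "prob_space M" and "complete_measure M"
    and "continuous_random_mapping M T"
    and "\<alpha>2 \<in> borel_measurable M" and "\<alpha>3 \<in> borel_measurable M"
    and "\<forall>\<omega>\<in>space M. 0 \<le> \<alpha>2 \<omega> \<and> 0 \<le> \<alpha>3 \<omega> \<and> \<alpha>2 \<omega> + \<alpha>3 \<omega> < 1"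
    and "\<forall>\<omega>\<in>space M. \<forall>x1 x2. x1 \<in> borel_measurable M \<longrightarrow> x2 \<in> borel_measurable M \<longrightarrow>
           norm (T \<omega> (x1 \<omega>) - T \<omega> (x2 \<omega>))
             \<le> \<alpha>2 \<omega> * norm (x1 \<omega> - T \<omega> (x1 \<omega>)) + \<alpha>3 \<omega> * norm (x2 \<omega> - T \<omega> (x2 \<omega>))"
  shows "(\<exists>x. random_fixed_point M T x) \<and>
         (\<forall>x y. random_fixed_point M T x \<longrightarrow> random_fixed_point M T y \<longrightarrow> (AE \<omega> in M. x \<omega> = y \<omega>))"
proof -
  note pM = assms(1)
  have Tm[measurable]: "(\<lambda>\<omega>. T \<omega> x) \<in> borel_measurable M" for x
    using assms(3) unfolding continuous_random_mapping_def random_mapping_def by blast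
  have R: "norm (T \<omega> a - T \<omega> b) \<le> \<alpha>2 \<omega> * norm (a - T \<omega> a) + \<alpha>3 \<omega> * norm (b - T \<omega> b)"
    if "\<omega> \<in> space M" for \<omega> a b
  proof -
    have H: "\<forall>x1 x2. x1 \<in> borel_measurable M \<longrightarrow> x2 \<in> borel_measurable M \<longrightarrow>
           norm (T \<omega> (x1 \<omega>) - T \<omega> (x2 \<omega>))
             \<le> \<alpha>2 \<omega> * norm (x1 \<omega> - T \<omega> (x1 \<omega>)) + \<alpha>3 \<omega> * norm (x2 \<omega> - T \<omega> (x2 \<omega>))"
      using bspec[OF assms(7) that] .
    show ?thesis using H[rule_format, of "\<lambda>_. a" "\<lambda>_. b"] by simp
  qed
  have co: "0 \<le> \<alpha>2 \<omega>" "0 \<le> \<alpha>3 \<omega>" "\<alpha>2 \<omega> + \<alpha>3 \<omega> < 1" if "\<omega> \<in> space M" for \<omega>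
    using assms(6) that by blast+
  have ex1: "\<exists>!p. T \<omega> p = p" if "\<omega> \<in> space M" for \<omega>
    using reich_fix[OF co[OF that] R[OF that]] .
  define f where "f \<omega> = (THE p. T \<omega> p = p)" for \<omega>
  have ffix: "T \<omega> (f \<omega>) = f \<omega>" if "\<omega> \<in> space M" for \<omega>
    unfolding f_def using theI'[OF ex1[OF that]] .
  obtain D :: "'a set" where D: "countable D" "D \<noteq> {}"
    "\<And>U. open U \<Longrightarrow> U \<noteq> {} \<Longrightarrow> \<exists>y \<in> D. y \<in> U"
    using countable_dense_exists by blast
  define e where "e = from_nat_into D"
  have eD: "range e = D" unfolding e_def using D by (simp add: range_from_nat_into)
  have small: "\<exists>k. norm (e k - T \<omega> (e k)) < \<epsilon>" if w: "\<omega> \<in> space M" and ep: "0 < \<epsilon>" for \<omega> \<epsilon>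
  proof -
    let ?p = "f \<omega>"
    have c3: "1 - \<alpha>3 \<omega> > 0" using co[OF w] by linarith
    then obtain d where "d \<in> D" "d \<in> ball ?p (\<epsilon> * (1 - \<alpha>3 \<omega>))"
      using D(3)[of "ball ?p (\<epsilon> * (1 - \<alpha>3 \<omega>))"] mult_pos_pos[OF ep c3] by auto
    then obtain k where k: "e k = d" and dd: "norm (d - ?p) < \<epsilon> * (1 - \<alpha>3 \<omega>)"
      using eD by (auto simp: dist_norm norm_minus_commute)
    have "norm (d - T \<omega> d) \<le> norm (d - ?p) + norm (T \<omega> ?p - T \<omega> d)"
      using norm_triangle_ineq[of "d - ?p" "?p - T \<omega> d"] ffix[OF w] by simp
    also have "\<dots> \<le> norm (d - ?p) + \<alpha>3 \<omega> * norm (d - T \<omega> d)"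
      using R[OF w, of ?p d] ffix[OF w] by simp
    finally have "(1 - \<alpha>3 \<omega>) * norm (d - T \<omega> d) < \<epsilon> * (1 - \<alpha>3 \<omega>)"
      using dd by (simp add: algebra_simps)
    hence "norm (d - T \<omega> d) < \<epsilon>" using c3 by (simp add: mult.commute)
    thus ?thesis using k by blast
  qed
  define kk where "kk n \<omega> = (LEAST k. norm (e k - T \<omega> (e k)) < inverse (real (Suc n)))" for n \<omega>
  define g where "g n \<omega> = e (kk n \<omega>)" for n \<omega>
  have kkm: "kk n \<in> measurable M (count_space UNIV)" for n
    unfolding kk_def by measurable
  have gm: "g n \<in> borel_measurable M" for n
    unfolding g_def
    by (rule measurable_compose_countable'[OF measurable_const kkm]) (auto intro: countableI_type)
  have gsmall: "norm (g n \<omega> - T \<omega> (g n \<omega>)) < inverse (real (Suc n))" if "\<omega> \<in> space M" for n \<omega>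
    unfolding g_def kk_def by (rule LeastI_ex) (rule small[OF that], simp)
  have glim: "(\<lambda>n. g n \<omega>) \<longlonglongrightarrow> f \<omega>" if w: "\<omega> \<in> space M" for \<omega>
  proof (rule reich_conv[OF co[OF w] R[OF w] ffix[OF w]])
    have "\<forall>n. norm (norm (g n \<omega> - T \<omega> (g n \<omega>))) \<le> inverse (real (Suc n))"
      using gsmall[OF w] by (simp add: less_imp_le)
    from Lim_null_comparison[OF always_eventually[OF this] LIMSEQ_inverse_real_of_nat]
    show "(\<lambda>n. norm (g n \<omega> - T \<omega> (g n \<omega>))) \<longlonglongrightarrow> 0" .
  qed
  have fm: "f \<in> borel_measurable M"
    by (rule borel_measurable_LIMSEQ_metric[OF gm glim])
  have "{\<omega> \<in> space M. T \<omega> (f \<omega>) = f \<omega>} = space M" using ffix by auto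
  hence "random_fixed_point M T f"
    unfolding random_fixed_point_def using fm prob_space.prob_space[OF pM] by simp
  moreover have "AE \<omega> in M. x \<omega> = y \<omega>"
    if x: "random_fixed_point M T x" and y: "random_fixed_point M T y" for x y
  proof -
    have "AE \<omega> in M. \<omega> \<in> {\<omega> \<in> space M. T \<omega> (x \<omega>) = x \<omega>}"
      using x unfolding random_fixed_point_def by (intro prob_space.AE_prob_1[OF pM]) simp
    moreover have "AE \<omega> in M. \<omega> \<in> {\<omega> \<in> space M. T \<omega> (y \<omega>) = y \<omega>}"
      using y unfolding random_fixed_point_def by (intro prob_space.AE_prob_1[OF pM]) simp
    ultimately show ?thesis
    proof eventually_elim
      case (elim \<omega>)
      then show ?case using R[of \<omega> "x \<omega>" "y \<omega>"] by simp
    qed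
  qed
  ultimately show ?thesis by blast
qed

end
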